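(* Let $F$ be a field of characteristic zero and let $\mathrm{Gr}$ be the Grassmann (exterior) algebra over $F$ of a vector space $V$ with basis $e_1,\dots,e_n$ ($n\in\mathbb N$) or with countable basis $e_1,e_2,\dots$. Then every Rota–Baxter operator $R$ of nonzero weight $\lambda$ on $\mathrm{Gr}$ is splitting, and, up to replacing $R$ by $-R-\lambda\,\mathrm{id}$, we have $R(1)=0$.
   Context: A linear operator $R$ on an algebra $A$ is a Rota–Baxter operator of weight $\lambda$ if $R(x)R(y)=R(R(x)y+xR(y)+\lambda xy)$ for all $x,y\in A$. Such $R$ is splitting if $A=A_1\oplus A_2$ as vector spaces for subalgebras $A_1,A_2$ and $R(a_1+a_2)=-\lambda a_2$ for $a_i\in A_i$. *)

theory Defs
  imports Main
begin

text \<open>An element is a finitely supported coefficient function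
  on finite subsets S of I; S stands for the monomial e_{s1} ... e_{sk}, s1 < ... < sk.\<close>

definition gr :: "nat set \<Rightarrow> (nat set \<Rightarrow> 'a::field) set" where
  "gr I = {x. finite {S. x S \<noteq> 0} \<and> (\<forall>S. x S \<noteq> 0 \<longrightarrow> finite S \<and> S \<subseteq> I)}"

definition gzero :: "nat set \<Rightarrow> 'a::field" where
  "gzero = (\<lambda>S. 0)"

definition gone :: "nat set \<Rightarrow> 'a::field" where
  "gone = (\<lambda>S. if S = {} then 1 else 0)"

definition gadd :: "(nat set \<Rightarrow> 'a::field) \<Rightarrow> (nat set \<Rightarrow> 'a) \<Rightarrow> (nat set \<Rightarrow> 'a)" where
  "gadd x y = (\<lambda>S. x S + y S)"

definition gscale :: "'a::field \<Rightarrow> (nat set \<Rightarrow> 'a) \<Rightarrow> (nat set \<Rightarrow> 'a)" where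
  "gscale c x = (\<lambda>S. c * x S)"

text \<open>Sign of e_S e_T = sign * e_{S \<union> T} for disjoint S, T: (-1)^(number of inversions).\<close>
definition gsign :: "nat set \<Rightarrow> nat set \<Rightarrow> 'a::field" where
  "gsign S T = (-1) ^ card {(s, t). s \<in> S \<and> t \<in> T \<and> t < s}"

definition gmul :: "(nat set \<Rightarrow> 'a::field) \<Rightarrow> (nat set \<Rightarrow> 'a) \<Rightarrow> (nat set \<Rightarrow> 'a)" where
  "gmul x y = (\<lambda>U. if finite U then (\<Sum>S\<in>Pow U. gsign S (U - S) * x S * y (U - S)) else 0)"

definition gr_linear :: "nat set \<Rightarrow> ((nat set \<Rightarrow> 'a::field) \<Rightarrow> (nat set \<Rightarrow> 'a)) \<Rightarrow> bool" where
  "gr_linear I R \<longleftrightarrow> (\<forall>x\<in>gr I. R x \<in> gr I)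
     \<and> (\<forall>x\<in>gr I. \<forall>y\<in>gr I. R (gadd x y) = gadd (R x) (R y))
     \<and> (\<forall>c. \<forall>x\<in>gr I. R (gscale c x) = gscale c (R x))"

definition rota_baxter :: "nat set \<Rightarrow> 'a::field \<Rightarrow> ((nat set \<Rightarrow> 'a) \<Rightarrow> (nat set \<Rightarrow> 'a)) \<Rightarrow> bool" where
  "rota_baxter I lam R \<longleftrightarrow> gr_linear I R \<and>
     (\<forall>x\<in>gr I. \<forall>y\<in>gr I. gmul (R x) (R y) =
        R (gadd (gadd (gmul (R x) y) (gmul x (R y))) (gscale lam (gmul x y))))"

definition gr_subalgebra :: "nat set \<Rightarrow> (nat set \<Rightarrow> 'a::field) set \<Rightarrow> bool" where
  "gr_subalgebra I A \<longleftrightarrow> A \<subseteq> gr I \<and> gzero \<in> A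
     \<and> (\<forall>x\<in>A. \<forall>y\<in>A. gadd x y \<in> A)
     \<and> (\<forall>c. \<forall>x\<in>A. gscale c x \<in> A)
     \<and> (\<forall>x\<in>A. \<forall>y\<in>A. gmul x y \<in> A)"

definition splitting :: "nat set \<Rightarrow> 'a::field \<Rightarrow> ((nat set \<Rightarrow> 'a) \<Rightarrow> (nat set \<Rightarrow> 'a)) \<Rightarrow> bool" where
  "splitting I lam R \<longleftrightarrow> (\<exists>A1 A2. gr_subalgebra I A1 \<and> gr_subalgebra I A2
     \<and> A1 \<inter> A2 = {gzero}
     \<and> (\<forall>x\<in>gr I. \<exists>a1\<in>A1. \<exists>a2\<in>A2. x = gadd a1 a2)
     \<and> (\<forall>a1\<in>A1. \<forall>a2\<in>A2. R (gadd a1 a2) = gscale (- lam) a2))"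

end

theory Submission imports Defs begin

lemma gr_inf: "x \<in> gr I \<Longrightarrow> \<not> finite U \<Longrightarrow> x U = 0"
  by (auto simp: gr_def)

lemma gr_lin: assumes "x \<in> gr I" "y \<in> gr I" shows "(\<lambda>S. a * x S + b * y S) \<in> gr I"
proof -
  have "{S. a * x S + b * y S \<noteq> 0} \<subseteq> {S. x S \<noteq> 0} \<union> {S. y S \<noteq> 0}" by auto
  moreover have "finite ({S. x S \<noteq> 0} \<union> {S. y S \<noteq> 0})" using assms by (simp add: gr_def)
  ultimately have f: "finite {S. a * x S + b * y S \<noteq> 0}" by (rule finite_subset)
  have "\<forall>S. a * x S + b * y S \<noteq> 0 \<longrightarrow> finite S \<and> S \<subseteq> I"
  proof (intro allI impI)
    fix S assume "a * x S + b * y S \<noteq> 0"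
    then have "x S \<noteq> 0 \<or> y S \<noteq> 0" by auto
    then show "finite S \<and> S \<subseteq> I" using assms unfolding gr_def by blast
  qed
  with f show ?thesis by (simp add: gr_def)
qed

lemma gr_add: "x \<in> gr I \<Longrightarrow> y \<in> gr I \<Longrightarrow> gadd x y \<in> gr I"
  using gr_lin[of x I y 1 1] by (simp add: gadd_def)

lemma gr_scale: "x \<in> gr I \<Longrightarrow> gscale c x \<in> gr I"
  using gr_lin[of x I x c 0] by (simp add: gscale_def)

lemma gone_gr: "gone \<in> gr I"
  by (auto simp: gr_def gone_def)

lemma gzero_gr: "gzero \<in> gr I"
  by (auto simp: gr_def gzero_def)

lemma gsign_empty1[simp]: "gsign {} T = 1" by (simp add: gsign_def)
lemma gsign_empty2[simp]: "gsign S {} = 1" by (simp add: gsign_def)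

lemma gmul_nz: "gmul x y U \<noteq> 0 \<Longrightarrow> finite U \<and> (\<exists>S\<subseteq>U. x S \<noteq> 0 \<and> y (U - S) \<noteq> 0)"
proof -
  assume h: "gmul x y U \<noteq> 0"
  then have fU: "finite U" by (auto simp: gmul_def split: if_splits)
  with h have "(\<Sum>S\<in>Pow U. gsign S (U - S) * x S * y (U - S)) \<noteq> 0" by (simp add: gmul_def)
  then obtain S where "S \<in> Pow U" "gsign S (U - S) * x S * y (U - S) \<noteq> 0"
    by (meson sum.neutral)
  then show ?thesis using fU by auto
qed

lemma gmul_gr: assumes x: "x \<in> gr I" and y: "y \<in> gr I" shows "gmul x y \<in> gr I"
proof -
  have "{U. gmul x y U \<noteq> 0} \<subseteq> (\<lambda>(S,T). S \<union> T) ` ({S. x S \<noteq> 0} \<times> {T. y T \<noteq> 0})"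
  proof
    fix U assume "U \<in> {U. gmul x y U \<noteq> 0}"
    then obtain S where "S \<subseteq> U" "x S \<noteq> 0" "y (U - S) \<noteq> 0" using gmul_nz by blast
    then show "U \<in> (\<lambda>(S,T). S \<union> T) ` ({S. x S \<noteq> 0} \<times> {T. y T \<noteq> 0})"
      by (intro image_eqI[where x="(S, U - S)"]) auto
  qed
  moreover have "finite ((\<lambda>(S,T). S \<union> T) ` ({S. x S \<noteq> 0} \<times> {T. y T \<noteq> 0}))"
    using x y by (auto simp: gr_def)
  ultimately have f: "finite {U. gmul x y U \<noteq> 0}" by (rule finite_subset)
  have "\<forall>U. gmul x y U \<noteq> 0 \<longrightarrow> finite U \<and> U \<subseteq> I"
  proof (intro allI impI)
    fix U assume "gmul x y U \<noteq> 0"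
    then obtain S where "finite U" "S \<subseteq> U" "x S \<noteq> 0" "y (U - S) \<noteq> 0" using gmul_nz by blast
    moreover have "S \<subseteq> I" "U - S \<subseteq> I" using calculation x y by (auto simp: gr_def)
    ultimately show "finite U \<and> U \<subseteq> I" by blast
  qed
  with f show ?thesis by (simp add: gr_def)
qed

lemma gmul_one_left: assumes "y \<in> gr I" shows "gmul gone y = y"
proof
  fix U
  show "gmul gone y U = y U"
  proof (cases "finite U")
    case True
    have "(\<Sum>S\<in>Pow U. gsign S (U - S) * gone S * y (U - S)) = (\<Sum>S\<in>Pow U. if S = {} then y U else 0)"
      by (rule sum.cong) (auto simp: gone_def)
    also have "\<dots> = y U" using True by (simp add: sum.delta')
    finally show ?thesis using True by (simp add: gmul_def)
  qed (use assms in \<open>simp add: gmul_def gr_inf\<close>)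
qed

lemma gmul_one_right: assumes "x \<in> gr I" shows "gmul x gone = x"
proof
  fix U
  show "gmul x gone U = x U"
  proof (cases "finite U")
    case True
    have "(\<Sum>S\<in>Pow U. gsign S (U - S) * x S * gone (U - S)) = (\<Sum>S\<in>Pow U. if S = U then x U else 0)"
      by (rule sum.cong) (auto simp: gone_def)
    also have "\<dots> = x U" using True by (simp add: sum.delta')
    finally show ?thesis using True by (simp add: gmul_def)
  qed (use assms in \<open>simp add: gmul_def gr_inf\<close>)
qed

lemma gmul_lin_left: "gmul (\<lambda>S. a * x S + b * y S) z = (\<lambda>U. a * gmul x z U + b * gmul y z U)"
  by (rule ext) (simp add: gmul_def sum_distrib_left sum.distrib algebra_simps)

lemma gmul_lin_right: "gmul z (\<lambda>S. a * x S + b * y S) = (\<lambda>U. a * gmul z x U + b * gmul z y U)"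
  by (rule ext) (simp add: gmul_def sum_distrib_left sum.distrib algebra_simps)

lemma gmul_add_left: "gmul (\<lambda>S. x S + c * y S) z = (\<lambda>U. gmul x z U + c * gmul y z U)"
  using gmul_lin_left[of 1 x c y z] by simp

lemma gmul_add_right: "gmul z (\<lambda>S. x S + c * y S) = (\<lambda>U. gmul z x U + c * gmul z y U)"
  using gmul_lin_right[of z 1 x c y] by simp

lemma gmul_empty: "gmul x y {} = x {} * y {}"
  by (simp add: gmul_def)



definition Tc :: "((nat set \<Rightarrow> 'a::field) \<Rightarrow> (nat set \<Rightarrow> 'a)) \<Rightarrow> 'a \<Rightarrow> (nat set \<Rightarrow> 'a) \<Rightarrow> (nat set \<Rightarrow> 'a)" where
  "Tc R c x = (\<lambda>S. R x S + c * x S)"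

definition star :: "((nat set \<Rightarrow> 'a::field) \<Rightarrow> (nat set \<Rightarrow> 'a)) \<Rightarrow> 'a \<Rightarrow> (nat set \<Rightarrow> 'a) \<Rightarrow> (nat set \<Rightarrow> 'a) \<Rightarrow> (nat set \<Rightarrow> 'a)" where
  "star R lam x y = gadd (gadd (gmul (R x) y) (gmul x (R y))) (gscale lam (gmul x y))"

lemma star_eq: "star R lam x y = (\<lambda>U. gmul (R x) y U + gmul x (R y) U + lam * gmul x y U)"
  by (simp add: star_def gadd_def gscale_def)

lemma rb_gr: "rota_baxter I lam R \<Longrightarrow> x \<in> gr I \<Longrightarrow> R x \<in> gr I"
  by (simp add: rota_baxter_def gr_linear_def)

lemma rb_lin: assumes rb: "rota_baxter I lam R" and x: "x \<in> gr I" and y: "y \<in> gr I"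
  shows "R (\<lambda>S. a * x S + b * y S) = (\<lambda>S. a * R x S + b * R y S)"
proof -
  have e: "(\<lambda>S. a * x S + b * y S) = gadd (gscale a x) (gscale b y)" by (simp add: gadd_def gscale_def)
  have l: "gr_linear I R" using rb by (simp add: rota_baxter_def)
  have "R (gadd (gscale a x) (gscale b y)) = gadd (R (gscale a x)) (R (gscale b y))"
    using l gr_scale[OF x] gr_scale[OF y] by (simp add: gr_linear_def)
  also have "\<dots> = gadd (gscale a (R x)) (gscale b (R y))" using l x y by (simp add: gr_linear_def)
  also have "\<dots> = (\<lambda>S. a * R x S + b * R y S)" by (simp add: gadd_def gscale_def)
  finally show ?thesis unfolding e .
qed

lemma rb_scale: assumes rb: "rota_baxter I lam R" and x: "x \<in> gr I"
  shows "R (\<lambda>S. a * x S) = (\<lambda>S. a * R x S)"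
  using rb_lin[OF rb x x, of a 0] by simp

lemma rb_mul: "rota_baxter I lam R \<Longrightarrow> x \<in> gr I \<Longrightarrow> y \<in> gr I \<Longrightarrow> gmul (R x) (R y) = R (star R lam x y)"
  by (simp add: rota_baxter_def star_def)

lemma star_gr: assumes rb: "rota_baxter I lam R" and x: "x \<in> gr I" and y: "y \<in> gr I"
  shows "star R lam x y \<in> gr I"
  unfolding star_def using rb_gr[OF rb x] rb_gr[OF rb y] x y
  by (intro gr_add gr_scale gmul_gr)

lemma T_gr: assumes rb: "rota_baxter I lam R" and x: "x \<in> gr I" shows "Tc R c x \<in> gr I"
  using gr_lin[OF rb_gr[OF rb x] x, of 1 c] by (simp add: Tc_def)

lemma T_lin: assumes rb: "rota_baxter I lam R" and x: "x \<in> gr I" and y: "y \<in> gr I"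
  shows "Tc R c (\<lambda>S. a * x S + b * y S) = (\<lambda>S. a * Tc R c x S + b * Tc R c y S)"
  by (rule ext) (simp add: Tc_def rb_lin[OF rb x y] algebra_simps)

lemma T_scale: assumes rb: "rota_baxter I lam R" and x: "x \<in> gr I"
  shows "Tc R c (\<lambda>S. a * x S) = (\<lambda>S. a * Tc R c x S)"
proof
  fix U
  have e: "R (\<lambda>S. a * x S) = (\<lambda>S. a * R x S)" by (rule rb_scale[OF rb x])
  show "Tc R c (\<lambda>S. a * x S) U = a * Tc R c x U"
    unfolding Tc_def e by (simp add: ring_distribs mult.left_commute)
qed

lemma T0: "Tc R 0 x = R x" by (simp add: Tc_def)

lemma R_T: assumes rb: "rota_baxter I lam R" and x: "x \<in> gr I"
  shows "R (Tc R c x) = (\<lambda>S. R (R x) S + c * R x S)"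
  using rb_lin[OF rb rb_gr[OF rb x] x, of 1 c] by (simp add: Tc_def)

lemma T_mul: assumes rb: "rota_baxter I lam R" and cc: "c * c = c * lam"
  and x: "x \<in> gr I" and y: "y \<in> gr I"
  shows "gmul (Tc R c x) (Tc R c y) = Tc R c (star R lam x y)"
proof
  fix U
  have m: "R (star R lam x y) U = gmul (R x) (R y) U" using rb_mul[OF rb x y] by simp
  have cc': "c * (c * gmul x y U) = c * (lam * gmul x y U)" using cc by (simp add: mult.assoc[symmetric])
  have r: "Tc R c (star R lam x y) U = gmul (R x) (R y) U + c * (gmul (R x) y U + gmul x (R y) U + lam * gmul x y U)"
    unfolding Tc_def m by (simp add: star_eq)
  show "gmul (Tc R c x) (Tc R c y) U = Tc R c (star R lam x y) U"
    unfolding r unfolding Tc_def gmul_add_left gmul_add_right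
    using cc' by (simp add: algebra_simps)
qed


lemma supp_fin: assumes "f \<in> gr I" shows "finite (\<Union>{S. f S \<noteq> 0})"
  using assms unfolding gr_def by (intro finite_Union) auto

lemma card_split: assumes "finite U" "S \<subseteq> U" shows "card U = card S + card (U - S)"
proof -
  have "card (S \<union> (U - S)) = card S + card (U - S)"
    by (rule card_Un_disjoint) (use assms in \<open>auto intro: finite_subset\<close>)
  moreover have "S \<union> (U - S) = U" using assms by blast
  ultimately show ?thesis by simp
qed

lemma killer:
  assumes rb: "rota_baxter I lam R" and cc: "c*c = c*lam" and dd: "d*d = d*lam"
    and w: "w \<in> gr I" and wc: "Tc R c w = gone" and wd: "Tc R d w {} = 0" and x: "x \<in> gr I"
  shows "Tc R c (Tc R d x) = (\<lambda>S. 0)"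
proof -
  define u where "u = Tc R d w"
  have ugr: "u \<in> gr I" using T_gr[OF rb w] u_def by simp
  have u0: "u {} = 0" using wd u_def by simp
  define J where "J = \<Union>{S. u S \<noteq> 0} \<union> \<Union>{S. Tc R d x S \<noteq> 0}"
  have fJ: "finite J" unfolding J_def using supp_fin[OF ugr] supp_fin[OF T_gr[OF rb x]] by simp
  define f where "f = (\<lambda>v. star R lam w v)"
  have inv: "(f ^^ k) x \<in> gr I \<and> Tc R c ((f ^^ k) x) = Tc R c x \<and>
     (\<forall>U. Tc R d ((f ^^ k) x) U \<noteq> 0 \<longrightarrow> U \<subseteq> J \<and> k \<le> card U)" for k
  proof (induction k)
    case 0
    show ?case using x unfolding J_def by auto
  next
    case (Suc k)
    let ?v = "(f ^^ k) x"
    have vgr: "?v \<in> gr I" and vc: "Tc R c ?v = Tc R c x"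
      and vs: "\<forall>U. Tc R d ?v U \<noteq> 0 \<longrightarrow> U \<subseteq> J \<and> k \<le> card U" using Suc.IH by auto
    have e: "(f ^^ Suc k) x = star R lam w ?v" by (simp add: f_def)
    have g: "star R lam w ?v \<in> gr I" by (rule star_gr[OF rb w vgr])
    have "Tc R c (star R lam w ?v) = gmul (Tc R c w) (Tc R c ?v)" by (rule T_mul[OF rb cc w vgr, symmetric])
    also have "\<dots> = gmul gone (Tc R c ?v)" using wc by simp
    also have "\<dots> = Tc R c ?v" by (rule gmul_one_left[OF T_gr[OF rb vgr]])
    finally have c1: "Tc R c (star R lam w ?v) = Tc R c x" using vc by simp
    have d1: "Tc R d (star R lam w ?v) = gmul u (Tc R d ?v)"
      using T_mul[OF rb dd w vgr] u_def by simp
    have s1: "U \<subseteq> J \<and> Suc k \<le> card U" if nz: "Tc R d (star R lam w ?v) U \<noteq> 0" for U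
    proof -
      from nz d1 have "gmul u (Tc R d ?v) U \<noteq> 0" by simp
      then obtain S where fU: "finite U" and SU: "S \<subseteq> U" and uS: "u S \<noteq> 0"
        and vS: "Tc R d ?v (U - S) \<noteq> 0" using gmul_nz by blast
      have "S \<noteq> {}" using uS u0 by auto
      moreover have "finite S" using fU SU finite_subset by blast
      ultimately have "1 \<le> card S" by (simp add: Suc_leI card_gt_0_iff)
      moreover have "U - S \<subseteq> J" "k \<le> card (U - S)" using vs vS by auto
      moreover have "S \<subseteq> J" using uS unfolding J_def by blast
      ultimately show ?thesis using card_split[OF fU SU] SU by auto
    qed
    show ?case using e g c1 s1 by simp
  qed
  define K where "K = Suc (card J)"
  define v where "v = (f ^^ K) x"
  have vgr: "v \<in> gr I" and vc: "Tc R c v = Tc R c x" using inv[of K] v_def by auto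
  have vd: "Tc R d v U = 0" for U
  proof (rule ccontr)
    assume "Tc R d v U \<noteq> 0"
    then have UJ: "U \<subseteq> J" and KU: "K \<le> card U" using inv[of K] v_def by auto
    then have "card U \<le> card J" using card_mono fJ by blast
    with KU show False unfolding K_def by simp
  qed
  define e where "e = (\<lambda>S. 1 * v S + (-1) * x S)"
  have egr: "e \<in> gr I" unfolding e_def by (rule gr_lin[OF vgr x])
  have ec: "Tc R c e U = 0" for U
    using T_lin[OF rb vgr x, of c 1 "-1"] vc unfolding e_def by simp
  have ed: "Tc R d e U = - Tc R d x U" for U
    using T_lin[OF rb vgr x, of d 1 "-1"] vd unfolding e_def by simp
  have key: "Tc R d x = (\<lambda>S. (c - d) * e S)"
  proof
    fix U
    have "R e U + c * e U = 0" using ec[of U] by (simp add: Tc_def)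
    then have r: "R e U = - (c * e U)" by (simp add: add_eq_0_iff2)
    have "R e U + d * e U = - Tc R d x U" using ed[of U] by (simp add: Tc_def)
    then show "Tc R d x U = (c - d) * e U" using r by (simp add: algebra_simps)
  qed
  show ?thesis
  proof
    fix U
    show "Tc R c (Tc R d x) U = 0" using ec T_scale[OF rb egr, of c "c - d"] key by simp
  qed
qed

lemma newton:
  assumes rb: "rota_baxter I lam R" and cc: "c*c = c*lam" and dd: "d*d = d*lam"
    and y: "y \<in> gr I" and yc: "Tc R c y {} = 1"
  shows "\<exists>w\<in>gr I. Tc R c w = gone \<and> (Tc R d y {} = 0 \<longrightarrow> Tc R d w {} = 0)"
proof -
  define m where "m = (\<lambda>w. \<lambda>S. 1 * gone S + (-1) * Tc R c w S)"
  define f where "f = (\<lambda>w. \<lambda>S. 2 * w S + (-1) * star R lam w w S)"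
  have mgr: "m w \<in> gr I" if "w \<in> gr I" for w
    unfolding m_def by (rule gr_lin[OF gone_gr T_gr[OF rb that]])
  define J where "J = \<Union>{S. m y S \<noteq> 0}"
  have fJ: "finite J" unfolding J_def by (rule supp_fin[OF mgr[OF y]])
  have fgr: "f w \<in> gr I" if "w \<in> gr I" for w
    unfolding f_def by (rule gr_lin[OF that star_gr[OF rb that that]])
  have step_m: "m (f w) = gmul (m w) (m w)" if wgr: "w \<in> gr I" for w
  proof -
    let ?t = "Tc R c w"
    have tgr: "?t \<in> gr I" by (rule T_gr[OF rb wgr])
    have tf: "Tc R c (f w) = (\<lambda>S. 2 * ?t S + (-1) * gmul ?t ?t S)"
      unfolding f_def T_lin[OF rb wgr star_gr[OF rb wgr wgr]] T_mul[OF rb cc wgr wgr] ..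
    have mw: "m w = (\<lambda>S. 1 * gone S + (-1) * ?t S)" by (simp add: m_def)
    have A: "gmul (m w) (m w) = (\<lambda>U. 1 * gmul gone (m w) U + (-1) * gmul ?t (m w) U)"
      by (subst (1) mw) (rule gmul_lin_left)
    have B: "gmul ?t (m w) = (\<lambda>U. 1 * gmul ?t gone U + (-1) * gmul ?t ?t U)"
      by (subst mw) (rule gmul_lin_right)
    show ?thesis
      unfolding A B gmul_one_left[OF mgr[OF wgr]] gmul_one_right[OF tgr]
      by (rule ext) (simp add: m_def tf algebra_simps)
  qed
  have step_d: "Tc R d (f w) {} = 2 * Tc R d w {} - Tc R d w {} * Tc R d w {}" if wgr: "w \<in> gr I" for w
  proof -
    have "Tc R d (f w) = (\<lambda>S. 2 * Tc R d w S + (-1) * Tc R d (star R lam w w) S)"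
      unfolding f_def by (rule T_lin[OF rb wgr star_gr[OF rb wgr wgr]])
    then show ?thesis using T_mul[OF rb dd wgr wgr, symmetric] by (simp add: gmul_empty)
  qed
  have inv: "(f ^^ k) y \<in> gr I \<and> (\<forall>U. m ((f ^^ k) y) U \<noteq> 0 \<longrightarrow> U \<subseteq> J \<and> Suc k \<le> card U)
     \<and> (Tc R d y {} = 0 \<longrightarrow> Tc R d ((f ^^ k) y) {} = 0)" for k
  proof (induction k)
    case 0
    have "U \<subseteq> J \<and> Suc 0 \<le> card U" if nz: "m y U \<noteq> 0" for U
    proof -
      have "m y {} = 0" using yc by (simp add: m_def gone_def)
      then have "U \<noteq> {}" using nz by auto
      moreover have "finite U" using nz mgr[OF y] by (auto simp: gr_def)
      ultimately have "Suc 0 \<le> card U" by (simp add: Suc_leI card_gt_0_iff)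
      moreover have "U \<subseteq> J" using nz unfolding J_def by blast
      ultimately show ?thesis by simp
    qed
    then show ?case using y by simp
  next
    case (Suc k)
    let ?w = "(f ^^ k) y"
    have wgr: "?w \<in> gr I" and ws: "\<forall>U. m ?w U \<noteq> 0 \<longrightarrow> U \<subseteq> J \<and> Suc k \<le> card U"
      and wd: "Tc R d y {} = 0 \<longrightarrow> Tc R d ?w {} = 0" using Suc.IH by auto
    have e: "(f ^^ Suc k) y = f ?w" by simp
    have s1: "U \<subseteq> J \<and> Suc (Suc k) \<le> card U" if nz: "m (f ?w) U \<noteq> 0" for U
    proof -
      from nz step_m[OF wgr] have "gmul (m ?w) (m ?w) U \<noteq> 0" by simp
      then obtain S where fU: "finite U" and SU: "S \<subseteq> U" and uS: "m ?w S \<noteq> 0"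
        and vS: "m ?w (U - S) \<noteq> 0" using gmul_nz by blast
      have "S \<subseteq> J" "Suc k \<le> card S" "U - S \<subseteq> J" "Suc k \<le> card (U - S)" using ws uS vS by auto
      then show ?thesis using card_split[OF fU SU] SU by auto
    qed
    show ?case using e fgr[OF wgr] s1 wd step_d[OF wgr] by simp
  qed
  define w where "w = (f ^^ card J) y"
  have wgr: "w \<in> gr I" using inv w_def by simp
  have mz: "m w U = 0" for U
  proof (rule ccontr)
    assume "m w U \<noteq> 0"
    then have UJ: "U \<subseteq> J" and KU: "Suc (card J) \<le> card U" using inv[of "card J"] w_def by auto
    then have "card U \<le> card J" using card_mono fJ by blast
    with KU show False by simp
  qed
  have "Tc R c w = gone"
  proof
    fix U show "Tc R c w U = gone U" using mz[of U] by (simp add: m_def)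
  qed
  moreover have "Tc R d y {} = 0 \<longrightarrow> Tc R d w {} = 0" using inv w_def by simp
  ultimately show ?thesis using wgr by blast
qed

lemma contra:
  assumes rb: "rota_baxter I lam R" and lam0: "lam \<noteq> 0" and z: "z \<in> gr I" and w: "w \<in> gr I"
    and zR: "Tc R 0 z = gone" and wT: "Tc R lam w = gone"
  shows False
proof -
  have cc0: "(0::'a) * 0 = 0 * lam" by simp
  have ccl: "lam * lam = lam * lam" by simp
  let ?p = "star R lam z w"
  have pgr: "?p \<in> gr I" by (rule star_gr[OF rb z w])
  have "Tc R 0 ?p = gmul (Tc R 0 z) (Tc R 0 w)" by (rule T_mul[OF rb cc0 z w, symmetric])
  also have "\<dots> = Tc R 0 w" using zR gmul_one_left[OF T_gr[OF rb w]] by simp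
  finally have p0: "Tc R 0 ?p = Tc R 0 w" .
  have "Tc R lam ?p = gmul (Tc R lam z) (Tc R lam w)" by (rule T_mul[OF rb ccl z w, symmetric])
  also have "\<dots> = Tc R lam z" using wT gmul_one_right[OF T_gr[OF rb z]] by simp
  finally have pl: "Tc R lam ?p = Tc R lam z" .
  define e where "e = (\<lambda>S. 1 * ?p S + (-1) * w S)"
  have e0: "Tc R 0 e U = 0" for U
    using T_lin[OF rb pgr w, of 0 1 "-1"] p0 unfolding e_def by simp
  have el: "Tc R lam e U = Tc R lam z U - gone U" for U
    using T_lin[OF rb pgr w, of lam 1 "-1"] pl wT unfolding e_def by simp
  have ez: "e U = z U" for U
  proof -
    have "R e U = 0" using e0[of U] by (simp add: Tc_def)
    moreover have "R z U = gone U" using zR by (simp add: Tc_def fun_eq_iff)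
    ultimately have "lam * e U = lam * z U" using el[of U] by (simp add: Tc_def)
    then show ?thesis using lam0 by simp
  qed
  have "e = z" by (rule ext) (rule ez)
  then have "R z {} = 0" using e0[of "{}"] by (simp add: Tc_def)
  moreover have "R z {} = 1" using zR by (simp add: Tc_def fun_eq_iff gone_def)
  ultimately show False by simp
qed


lemma gmul_scale_left: "gmul (gscale a x) y = gscale a (gmul x y)"
  by (rule ext) (simp add: gmul_def gscale_def sum_distrib_left algebra_simps)

lemma gmul_scale_right: "gmul x (gscale a y) = gscale a (gmul x y)"
  by (rule ext) (simp add: gmul_def gscale_def sum_distrib_left algebra_simps)

lemma gmul_zero_left: "gmul gzero y = gzero"
  by (rule ext) (simp add: gmul_def gzero_def)

lemma gmul_zero_right: "gmul x gzero = gzero"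
  by (rule ext) (simp add: gmul_def gzero_def)

lemma split_lemma:
  assumes rb: "rota_baxter I lam R" and lam0: "lam \<noteq> 0"
    and key: "\<forall>x\<in>gr I. R (R x) = gscale (-lam) (R x)"
  shows "splitting I lam R"
proof -
  have lin: "gr_linear I R" using rb by (simp add: rota_baxter_def)
  have Radd: "R (gadd x y) = gadd (R x) (R y)" if "x \<in> gr I" "y \<in> gr I" for x y
    using lin that unfolding gr_linear_def by blast
  have Rsc: "R (gscale c x) = gscale c (R x)" if "x \<in> gr I" for c x
    using lin that unfolding gr_linear_def by blast
  have Rgr: "R x \<in> gr I" if "x \<in> gr I" for x using lin that unfolding gr_linear_def by blast
  have Rmul: "gmul (R x) (R y) = R (star R lam x y)" if "x \<in> gr I" "y \<in> gr I" for x y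
    by (rule rb_mul[OF rb that])
  have Rzero: "R gzero = gzero"
  proof -
    have h: "R (gscale 0 gzero) = gscale 0 (R gzero)" by (rule Rsc[OF gzero_gr])
    have e1: "gscale 0 gzero = gzero" and e2: "gscale 0 (R gzero) = gzero" by (simp_all add: gscale_def gzero_def)
    show ?thesis using h unfolding e1 e2 .
  qed
  define A1 where "A1 = {x\<in>gr I. R x = gzero}"
  define A2 where "A2 = {x\<in>gr I. R x = gscale (-lam) x}"
  have m1: "gmul x y \<in> A1" if "x \<in> A1" "y \<in> A1" for x y
  proof -
    have x: "x \<in> gr I" "R x = gzero" and y: "y \<in> gr I" "R y = gzero" using that A1_def by auto
    have st: "star R lam x y = gscale lam (gmul x y)"
      unfolding star_def x(2) y(2) gmul_zero_left gmul_zero_right by (simp add: gadd_def gzero_def)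
    have "gzero = gmul (R x) (R y)" using x(2) y(2) by (simp add: gmul_zero_left)
    also have "\<dots> = R (star R lam x y)" by (rule Rmul[OF x(1) y(1)])
    also have "\<dots> = gscale lam (R (gmul x y))" unfolding st by (rule Rsc[OF gmul_gr[OF x(1) y(1)]])
    finally have "gzero = gscale lam (R (gmul x y))" .
    then have "R (gmul x y) = gzero" using lam0 by (simp add: fun_eq_iff gscale_def gzero_def)
    then show ?thesis using gmul_gr[OF x(1) y(1)] A1_def by simp
  qed
  have m2: "gmul x y \<in> A2" if "x \<in> A2" "y \<in> A2" for x y
  proof -
    have x: "x \<in> gr I" "R x = gscale (-lam) x" and y: "y \<in> gr I" "R y = gscale (-lam) y" using that A2_def by auto
    have st: "star R lam x y = gscale (-lam) (gmul x y)"
      unfolding star_def x(2) y(2) gmul_scale_left gmul_scale_right by (rule ext) (simp add: gadd_def gscale_def)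
    have "gscale (-lam) (gscale (-lam) (gmul x y)) = gmul (R x) (R y)"
      unfolding x(2) y(2) gmul_scale_left gmul_scale_right ..
    also have "\<dots> = R (star R lam x y)" by (rule Rmul[OF x(1) y(1)])
    also have "\<dots> = gscale (-lam) (R (gmul x y))" unfolding st by (rule Rsc[OF gmul_gr[OF x(1) y(1)]])
    finally have eq: "gscale (-lam) (gscale (-lam) (gmul x y)) = gscale (-lam) (R (gmul x y))" .
    have "R (gmul x y) = gscale (-lam) (gmul x y)"
    proof
      fix U
      have "(-lam) * ((-lam) * gmul x y U) = (-lam) * R (gmul x y) U"
        using fun_cong[OF eq, of U] unfolding gscale_def .
      then have "(-lam) * gmul x y U = R (gmul x y) U"
        using lam0 by (metis mult_left_cancel neg_equal_0_iff_equal)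
      then show "R (gmul x y) U = gscale (-lam) (gmul x y) U" by (simp add: gscale_def)
    qed
    then show ?thesis using gmul_gr[OF x(1) y(1)] A2_def by simp
  qed
  have gz: "gadd gzero gzero = gzero" "gscale c gzero = gzero" for c by (simp_all add: gadd_def gscale_def gzero_def)
  have s1: "gr_subalgebra I A1"
    unfolding gr_subalgebra_def
  proof (intro conjI ballI allI)
    show "A1 \<subseteq> gr I" using A1_def by auto
    show "gzero \<in> A1" using A1_def gzero_gr Rzero by simp
    fix x y assume "x \<in> A1" "y \<in> A1"
    then have x: "x \<in> gr I" "R x = gzero" and y: "y \<in> gr I" "R y = gzero" using A1_def by auto
    have "R (gadd x y) = gzero" using Radd[OF x(1) y(1)] x(2) y(2) gz by simp
    then show "gadd x y \<in> A1" using A1_def gr_add[OF x(1) y(1)] by simp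
  next
    fix c x assume "x \<in> A1"
    then have x: "x \<in> gr I" "R x = gzero" using A1_def by auto
    have "R (gscale c x) = gzero" using Rsc[OF x(1)] x(2) gz by simp
    then show "gscale c x \<in> A1" using A1_def gr_scale[OF x(1)] by simp
  next
    fix x y assume "x \<in> A1" "y \<in> A1" then show "gmul x y \<in> A1" by (rule m1)
  qed
  have s2: "gr_subalgebra I A2"
    unfolding gr_subalgebra_def
  proof (intro conjI ballI allI)
    show "A2 \<subseteq> gr I" using A2_def by auto
    have "R gzero = gscale (-lam) gzero" using Rzero by (simp add: gscale_def gzero_def)
    then show "gzero \<in> A2" using A2_def gzero_gr by simp
    fix x y assume "x \<in> A2" "y \<in> A2"
    then have x: "x \<in> gr I" "R x = gscale (-lam) x" and y: "y \<in> gr I" "R y = gscale (-lam) y" using A2_def by auto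
    have "R (gadd x y) = gadd (gscale (-lam) x) (gscale (-lam) y)" using Radd[OF x(1) y(1)] x(2) y(2) by simp
    also have "\<dots> = gscale (-lam) (gadd x y)" by (simp add: gadd_def gscale_def algebra_simps)
    finally show "gadd x y \<in> A2" using A2_def gr_add[OF x(1) y(1)] by simp
  next
    fix c x assume "x \<in> A2"
    then have x: "x \<in> gr I" "R x = gscale (-lam) x" using A2_def by auto
    have "R (gscale c x) = gscale c (gscale (-lam) x)" using Rsc[OF x(1)] x(2) by simp
    also have "\<dots> = gscale (-lam) (gscale c x)" by (simp add: gscale_def algebra_simps)
    finally show "gscale c x \<in> A2" using A2_def gr_scale[OF x(1)] by simp
  next
    fix x y assume "x \<in> A2" "y \<in> A2" then show "gmul x y \<in> A2" by (rule m2)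
  qed
  have int: "A1 \<inter> A2 = {gzero}"
  proof
    show "A1 \<inter> A2 \<subseteq> {gzero}"
    proof
      fix x assume "x \<in> A1 \<inter> A2"
      then have "gzero = gscale (-lam) x" using A1_def A2_def by auto
      then have "x = gzero" using lam0 by (simp add: fun_eq_iff gscale_def gzero_def)
      then show "x \<in> {gzero}" by simp
    qed
    show "{gzero} \<subseteq> A1 \<inter> A2" using s1 s2 unfolding gr_subalgebra_def by auto
  qed
  have dec: "\<exists>a1\<in>A1. \<exists>a2\<in>A2. x = gadd a1 a2" if x: "x \<in> gr I" for x
  proof -
    define a2 where "a2 = gscale (-1/lam) (R x)"
    define a1 where "a1 = gadd x (gscale (1/lam) (R x))"
    have RRx: "R (R x) = gscale (-lam) (R x)" using key x by simp
    have a2gr: "a2 \<in> gr I" unfolding a2_def by (rule gr_scale[OF Rgr[OF x]])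
    have a1gr: "a1 \<in> gr I" unfolding a1_def by (rule gr_add[OF x gr_scale[OF Rgr[OF x]]])
    have "R a2 = gscale (-1/lam) (R (R x))" unfolding a2_def by (rule Rsc[OF Rgr[OF x]])
    then have "R a2 = gscale (-lam) a2" using RRx lam0 by (simp add: a2_def gscale_def fun_eq_iff)
    then have "a2 \<in> A2" using a2gr A2_def by simp
    moreover have "R a1 = gadd (R x) (gscale (1/lam) (R (R x)))"
      unfolding a1_def using Radd[OF x gr_scale[OF Rgr[OF x]]] Rsc[OF Rgr[OF x]] by simp
    then have "R a1 = gzero" using RRx lam0 by (simp add: gadd_def gscale_def gzero_def fun_eq_iff)
    then have "a1 \<in> A1" using a1gr A1_def by simp
    moreover have "x = gadd a1 a2" using lam0 by (simp add: a1_def a2_def gadd_def gscale_def fun_eq_iff)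
    ultimately show ?thesis by blast
  qed
  have Rdec: "R (gadd a1 a2) = gscale (- lam) a2" if "a1 \<in> A1" "a2 \<in> A2" for a1 a2
  proof -
    have "a1 \<in> gr I" "R a1 = gzero" "a2 \<in> gr I" "R a2 = gscale (-lam) a2" using that A1_def A2_def by auto
    then show ?thesis using Radd by (simp add: gadd_def gzero_def)
  qed
  show ?thesis unfolding splitting_def using s1 s2 int dec Rdec by blast
qed

theorem corollary4:
  fixes lam :: "'a::field_char_0"
    and R :: "(nat set \<Rightarrow> 'a) \<Rightarrow> (nat set \<Rightarrow> 'a)"
    and I :: "nat set" and n :: nat
  assumes "I = {1..n} \<or> I = {1..}"
    and "lam \<noteq> 0"
    and "rota_baxter I lam R"
  shows "splitting I lam R \<and> (R gone = gzero \<or> R gone = gscale (- lam) gone)"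
proof -
  have rb: "rota_baxter I lam R" and lam0: "lam \<noteq> 0" using assms by auto
  have cc0: "(0::'a) * 0 = 0 * lam" by simp
  have ccl: "lam * lam = lam * lam" by simp
  define \<alpha> where "\<alpha> = R gone {}"
  have sgr: "(\<lambda>S. k * gone S) \<in> gr I" for k using gr_lin[OF gone_gr gone_gr, of k 0] by simp
  have Tsg: "Tc R c (\<lambda>S. k * gone S) {} = k * (\<alpha> + c)" for c k
    using T_scale[OF rb gone_gr, of c k] by (simp add: Tc_def gone_def \<alpha>_def)
  have main: "(\<forall>x\<in>gr I. R (R x) = gscale (-lam) (R x)) \<and> (R gone = gzero \<or> R gone = gscale (- lam) gone)"
  proof (cases "\<alpha> = 0")
    case True
    have "Tc R lam (\<lambda>S. (1/lam) * gone S) {} = 1" using Tsg[of lam "1/lam"] True lam0 by simp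
    from newton[OF rb ccl cc0 sgr this] obtain w where w: "w \<in> gr I" "Tc R lam w = gone"
      and w0': "Tc R 0 (\<lambda>S. (1/lam) * gone S) {} = 0 \<longrightarrow> Tc R 0 w {} = 0" by blast
    have w0: "Tc R 0 w {} = 0" using w0' Tsg[of 0 "1/lam"] True by simp
    have key: "R (R x) = gscale (-lam) (R x)" if x: "x \<in> gr I" for x
    proof
      fix U
      have "Tc R lam (Tc R 0 x) U = 0" using killer[OF rb ccl cc0 w(1) w(2) w0 x] by simp
      then have "R (R x) U + lam * R x U = 0" by (simp add: Tc_def T0)
      then show "R (R x) U = gscale (-lam) (R x) U" by (simp add: gscale_def add_eq_0_iff2)
    qed
    have "R gone = R (Tc R lam w)" using w(2) by simp
    also have "\<dots> = (\<lambda>S. R (R w) S + lam * R w S)" by (rule R_T[OF rb w(1)])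
    also have "\<dots> = gzero" using key[OF w(1)] by (simp add: gscale_def gzero_def)
    finally show ?thesis using key by simp
  next
    case False
    show ?thesis
    proof (cases "\<alpha> = -lam")
      case True
      have "Tc R 0 (\<lambda>S. (-1/lam) * gone S) {} = 1" using Tsg[of 0 "-1/lam"] True lam0 by simp
      from newton[OF rb cc0 ccl sgr this] obtain z where z: "z \<in> gr I" "Tc R 0 z = gone"
        and z0': "Tc R lam (\<lambda>S. (-1/lam) * gone S) {} = 0 \<longrightarrow> Tc R lam z {} = 0" by blast
      have z0: "Tc R lam z {} = 0" using z0' Tsg[of lam "-1/lam"] True by simp
      have key: "R (R x) = gscale (-lam) (R x)" if x: "x \<in> gr I" for x
      proof
        fix U
        have "Tc R 0 (Tc R lam x) U = 0" using killer[OF rb cc0 ccl z(1) z(2) z0 x] by simp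
        then have "R (R x) U + lam * R x U = 0" using R_T[OF rb x, of lam] by (simp add: T0)
        then show "R (R x) U = gscale (-lam) (R x) U" by (simp add: gscale_def add_eq_0_iff2)
      qed
      have Rz: "R z = gone" using z(2) by (simp add: T0)
      have "R gone = R (R z)" using Rz by simp
      also have "\<dots> = gscale (-lam) gone" using key[OF z(1)] Rz by simp
      finally show ?thesis using key by simp
    next
      case False2: False
      have a1: "\<alpha> + lam \<noteq> 0" using False2 by (simp add: add_eq_0_iff2)
      have "Tc R 0 (\<lambda>S. (1/\<alpha>) * gone S) {} = 1" using Tsg[of 0 "1/\<alpha>"] False by simp
      from newton[OF rb cc0 cc0 sgr this] obtain z where z: "z \<in> gr I" "Tc R 0 z = gone" by blast
      have "Tc R lam (\<lambda>S. (1/(\<alpha> + lam)) * gone S) {} = 1" using Tsg[of lam "1/(\<alpha> + lam)"] a1 by simp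
      from newton[OF rb ccl ccl sgr this] obtain w where w: "w \<in> gr I" "Tc R lam w = gone" by blast
      from contra[OF rb lam0 z(1) w(1) z(2) w(2)] show ?thesis ..
    qed
  qed
  then show ?thesis using split_lemma[OF rb lam0] by blast
qed

end
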